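(* Let $F=(f_t)_{t\in\mathbb{R}}$ be a continuous flow on a compact metric space $X$ and $\phi\colon X\to\mathbb{R}$ continuous. Suppose $\mathcal{G}\subset X\times\mathbb{R}^+$ has tail (W)-specification at scale $\delta>0$, that $\gamma>2\delta$ and $\eta\ge0$, and that $\phi$ has the Bowen property on $\mathcal{G}$ at scale $\max\{\gamma/2,\eta\}$. Then there is $C_4$ such that for every $t\ge0$, $$\Lambda(\mathcal{G},\gamma,\eta,t)\le C_4e^{tP(\phi)}.$$
   Context: $d_t(x,y)=\sup_{s\in[0,t]}d(f_sx,f_sy)$, $B_t(x,r)=\{y:d_t(x,y)<r\}$; $(t,\delta)$-separated means $d_t(x,y)>\delta$ for distinct points. $\mathcal{C}_t=\{x:(x,t)\in\mathcal{C}\}$; $\Phi_\eta(x,t)=\sup_{y\in B_t(x,\eta)}\int_0^t\phi(f_sy)ds$; $\Lambda(\mathcal{C},\delta,\eta,t)=\sup\{\sum_{x\in E}e^{\Phi_\eta(x,t)}:E\subset\mathcal{C}_t\ (t,\delta)\text{-separated}\}$; $P(\phi)$ is the topological pressure of the flow. (W)-specification at scale $\delta$: there is $\tau>0$ such that for every $\{(x_i,t_i)\}_{i=1}^k$ in the collection there are $y$ and $\tau_i\in[0,\tau]$ with $d_{t_j}(f_{s_{j-1}+\tau_{j-1}}y,x_j)<\delta$ for all $j$ ($s_j=\sum_{i\le j}t_i+\sum_{i\le j-1}\tau_i$, $s_0=\tau_0=0$), with collections agreeing in the first $j$ entries having equal $\tau_i$ for $i<j$. Tail (W)-specification at scale $\delta$: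 there is $T_0>0$ such that $\mathcal{G}\cap(X\times[T_0,\infty))$ has (W)-specification at scale $\delta$. Bowen property at scale $r$ on $\mathcal{G}$: there is $K$ with $\sup_{y\in B_t(x,r)}|\Phi_0(x,t)-\Phi_0(y,t)|\le K$ for $(x,t)\in\mathcal{G}$. *)

theory Defs
  imports "HOL-Analysis.Analysis"
begin

definition continuous_flow :: "'a::metric_space set \<Rightarrow> (real \<Rightarrow> 'a \<Rightarrow> 'a) \<Rightarrow> bool" where
  "continuous_flow X f \<longleftrightarrow>
     (\<forall>t. f t ` X \<subseteq> X) \<and>
     (\<forall>x\<in>X. f 0 x = x) \<and>
     (\<forall>s t. \<forall>x\<in>X. f (s + t) x = f s (f t x)) \<and>
     continuous_on (UNIV \<times> X) (\<lambda>(t, x). f t x)"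

definition bowen_dist :: "(real \<Rightarrow> 'a::metric_space \<Rightarrow> 'a) \<Rightarrow> real \<Rightarrow> 'a \<Rightarrow> 'a \<Rightarrow> real" where
  "bowen_dist f t x y = (SUP s\<in>{0..t}. dist (f s x) (f s y))"

definition bowen_ball :: "'a::metric_space set \<Rightarrow> (real \<Rightarrow> 'a \<Rightarrow> 'a) \<Rightarrow> real \<Rightarrow> 'a \<Rightarrow> real \<Rightarrow> 'a set" where
  "bowen_ball X f t x r = {y\<in>X. bowen_dist f t x y < r}"

text \<open>\<open>\<Phi>_\<eta>(x,t) = sup_{y\<in>B_t(x,\<eta>)} \<integral>_0^t \<phi>(f_s y) ds\<close>; the point \<open>x\<close> itself is
  included so that \<open>\<Phi>_0(x,t) = \<integral>_0^t \<phi>(f_s x) ds\<close> (for \<open>\<eta> > 0\<close> this changes nothing).\<close>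
definition Phi :: "'a::metric_space set \<Rightarrow> (real \<Rightarrow> 'a \<Rightarrow> 'a) \<Rightarrow> ('a \<Rightarrow> real) \<Rightarrow> real \<Rightarrow> 'a \<Rightarrow> real \<Rightarrow> real" where
  "Phi X f \<phi> \<eta> x t = (SUP y\<in>insert x (bowen_ball X f t x \<eta>). integral {0..t} (\<lambda>s. \<phi> (f s y)))"

definition separated :: "(real \<Rightarrow> 'a::metric_space \<Rightarrow> 'a) \<Rightarrow> real \<Rightarrow> real \<Rightarrow> 'a set \<Rightarrow> bool" where
  "separated f t \<delta> E \<longleftrightarrow> (\<forall>x\<in>E. \<forall>y\<in>E. x \<noteq> y \<longrightarrow> bowen_dist f t x y > \<delta>)"

definition Lambda :: "'a::metric_space set \<Rightarrow> (real \<Rightarrow> 'a \<Rightarrow> 'a) \<Rightarrow> ('a \<Rightarrow> real) \<Rightarrow> ('a \<times> real) set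
                       \<Rightarrow> real \<Rightarrow> real \<Rightarrow> real \<Rightarrow> real" where
  "Lambda X f \<phi> C \<delta> \<eta> t =
     Sup {(\<Sum>x\<in>E. exp (Phi X f \<phi> \<eta> x t)) | E. finite E \<and> E \<subseteq> {x. (x, t) \<in> C} \<and> separated f t \<delta> E}"

definition top_pressure :: "'a::metric_space set \<Rightarrow> (real \<Rightarrow> 'a \<Rightarrow> 'a) \<Rightarrow> ('a \<Rightarrow> real) \<Rightarrow> ereal" where
  "top_pressure X f \<phi> =
     Lim (at_right (0::real))
       (\<lambda>\<delta>. Limsup at_top (\<lambda>t::real. ereal (ln (Lambda X f \<phi> (X \<times> {0..}) \<delta> 0 t) / t)))"

text \<open>A finite collection \<open>{(x_i,t_i)}_{i=1}^k\<close> is a list \<open>ps\<close>; \<open>tau ps i\<close> (0-indexed) is the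
  transition time \<open>\<tau>_{i+1}\<close> after the \<open>(i+1)\<close>-st segment.  Segment \<open>j\<close> (0-indexed) starts at
  time \<open>\<Sum>_{i<j} (t_i + \<tau>_i)\<close> along the orbit of \<open>y\<close>.\<close>
definition W_spec :: "'a::metric_space set \<Rightarrow> (real \<Rightarrow> 'a \<Rightarrow> 'a) \<Rightarrow> ('a \<times> real) set \<Rightarrow> real \<Rightarrow> bool" where
  "W_spec X f D \<delta> \<longleftrightarrow>
     (\<exists>\<tau>>0. \<exists>tau :: ('a \<times> real) list \<Rightarrow> nat \<Rightarrow> real.
        (\<forall>ps. set ps \<subseteq> D \<longrightarrow>
           (\<forall>i. i + 1 < length ps \<longrightarrow> tau ps i \<in> {0..\<tau>}) \<and>
           (\<exists>y\<in>X. \<forall>j<length ps.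
              bowen_dist f (snd (ps ! j))
                 (f (\<Sum>i<j. snd (ps ! i) + tau ps i) y) (fst (ps ! j)) < \<delta>)) \<and>
        (\<forall>ps qs j. set ps \<subseteq> D \<longrightarrow> set qs \<subseteq> D \<longrightarrow> take j ps = take j qs \<longrightarrow>
           (\<forall>i. i + 1 < j \<longrightarrow> tau ps i = tau qs i)))"

definition tail_W_spec :: "'a::metric_space set \<Rightarrow> (real \<Rightarrow> 'a \<Rightarrow> 'a) \<Rightarrow> ('a \<times> real) set \<Rightarrow> real \<Rightarrow> bool" where
  "tail_W_spec X f G \<delta> \<longleftrightarrow> (\<exists>T0>0. W_spec X f (G \<inter> (X \<times> {T0..})) \<delta>)"

definition bowen_property :: "'a::metric_space set \<Rightarrow> (real \<Rightarrow> 'a \<Rightarrow> 'a) \<Rightarrow> ('a \<Rightarrow> real) \<Rightarrow> ('a \<times> real) set \<Rightarrow> real \<Rightarrow> bool" where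
  "bowen_property X f \<phi> G r \<longleftrightarrow>
     (\<exists>K. \<forall>(x, t)\<in>G. \<forall>y\<in>bowen_ball X f t x r. \<bar>Phi X f \<phi> 0 x t - Phi X f \<phi> 0 y t\<bar> \<le> K)"

end

theory Submission
  imports Defs
begin


locale flowsys =
  fixes X :: "'a::metric_space set" and f :: "real \<Rightarrow> 'a \<Rightarrow> 'a" and \<phi> :: "'a \<Rightarrow> real" and M :: real
  assumes cX: "compact X" and fl: "continuous_flow X f" and cphi: "continuous_on X \<phi>"
    and Mb: "\<And>z. z \<in> X \<Longrightarrow> \<bar>\<phi> z\<bar> \<le> M"
begin

lemma f_in: "x \<in> X \<Longrightarrow> f t x \<in> X"
  using fl unfolding continuous_flow_def by blast

lemma f_add: "x \<in> X \<Longrightarrow> f (s + t) x = f s (f t x)"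
  using fl unfolding continuous_flow_def by blast

lemma f_0: "x \<in> X \<Longrightarrow> f 0 x = x"
  using fl unfolding continuous_flow_def by blast

lemma fcont: "continuous_on (UNIV \<times> X) (\<lambda>(t, x). f t x)"
  using fl unfolding continuous_flow_def by blast

lemma orbit_cont: assumes "x \<in> X" shows "continuous_on UNIV (\<lambda>s. f s x)"
proof -
  have "continuous_on UNIV ((\<lambda>(t, x). f t x) \<circ> (\<lambda>s. (s, x)))"
    by (rule continuous_on_compose) (auto intro!: continuous_intros continuous_on_subset[OF fcont] simp: assms)
  then show ?thesis by (simp add: o_def)
qed

lemma phi_orbit_cont: assumes "x \<in> X" shows "continuous_on UNIV (\<lambda>s. \<phi> (f s x))"
proof -
  have "continuous_on UNIV (\<phi> \<circ> (\<lambda>s. f s x))"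
    by (rule continuous_on_compose[OF orbit_cont[OF assms]]) (auto intro: continuous_on_subset[OF cphi] f_in assms)
  then show ?thesis by (simp add: o_def)
qed

lemma phi_orbit_int: "x \<in> X \<Longrightarrow> (\<lambda>s. \<phi> (f s x)) integrable_on {a..b}"
  by (rule integrable_continuous_interval) (auto intro: continuous_on_subset[OF phi_orbit_cont])

lemma int_bound: assumes "x \<in> X" "t \<ge> 0"
  shows "\<bar>integral {0..t} (\<lambda>s. \<phi> (f s x))\<bar> \<le> t * M"
proof -
  have "integral {0..t} (\<lambda>s. \<phi> (f s x)) \<le> integral {0..t} (\<lambda>s. M)"
    by (rule integral_le) (auto intro: phi_orbit_int assms Mb f_in abs_le_D1)
  moreover have "integral {0..t} (\<lambda>s. - M) \<le> integral {0..t} (\<lambda>s. \<phi> (f s x))"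
  proof (rule integral_le)
    show "- M \<le> \<phi> (f s x)" if "s \<in> {0..t}" for s
      using Mb[OF f_in[OF assms(1)]] abs_le_D2 by (metis minus_le_iff)
  qed (auto intro: phi_orbit_int assms)
  ultimately show ?thesis using assms by (simp add: abs_le_iff)
qed

lemma dist_bdd: "\<exists>B. \<forall>x\<in>X. \<forall>y\<in>X. dist x y \<le> B"
  using compact_imp_bounded[OF cX] by (meson bounded_two_points)

lemma bdd_dist: assumes "x \<in> X" "y \<in> X" shows "bdd_above ((\<lambda>s. dist (f s x) (f s y)) ` A)"
proof -
  obtain B where "\<forall>x\<in>X. \<forall>y\<in>X. dist x y \<le> B" using dist_bdd by blast
  then show ?thesis using assms f_in by (auto intro!: bdd_aboveI)
qed

lemma bd_ge: "x \<in> X \<Longrightarrow> y \<in> X \<Longrightarrow> s \<in> {0..t} \<Longrightarrow> dist (f s x) (f s y) \<le> bowen_dist f t x y"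
  unfolding bowen_dist_def by (rule cSUP_upper[OF _ bdd_dist])

lemma bd_nonneg: "x \<in> X \<Longrightarrow> y \<in> X \<Longrightarrow> t \<ge> 0 \<Longrightarrow> 0 \<le> bowen_dist f t x y"
  using bd_ge[of x y 0 t] by (meson atLeastAtMost_iff order.refl zero_le_dist order_trans)

lemma bd_self: "t \<ge> 0 \<Longrightarrow> bowen_dist f t x x = 0"
  unfolding bowen_dist_def by simp

lemma bd_sym: "bowen_dist f t x y = bowen_dist f t y x"
  unfolding bowen_dist_def by (simp add: dist_commute)

lemma bd_le: "t \<ge> 0 \<Longrightarrow> (\<And>s. s \<in> {0..t} \<Longrightarrow> dist (f s x) (f s y) \<le> c) \<Longrightarrow> bowen_dist f t x y \<le> c"
  unfolding bowen_dist_def by (rule cSUP_least) auto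

lemma bd_gt: "x \<in> X \<Longrightarrow> y \<in> X \<Longrightarrow> t \<ge> 0 \<Longrightarrow> c < bowen_dist f t x y \<Longrightarrow> \<exists>s\<in>{0..t}. c < dist (f s x) (f s y)"
  unfolding bowen_dist_def using less_cSUP_iff[OF _ bdd_dist] by (metis atLeastAtMost_iff empty_iff order.refl)

lemma Phi0: assumes "x \<in> X" "t \<ge> 0" shows "Phi X f \<phi> 0 x t = integral {0..t} (\<lambda>s. \<phi> (f s x))"
proof -
  have "bowen_ball X f t x 0 = {}" unfolding bowen_ball_def using bd_nonneg assms by force
  then show ?thesis unfolding Phi_def by simp
qed

lemma Phi_le: assumes "x \<in> X" "t \<ge> 0" shows "Phi X f \<phi> \<eta> x t \<le> t * M"
  unfolding Phi_def
  by (rule cSUP_least) (use int_bound assms in \<open>auto simp: bowen_ball_def abs_le_iff\<close>)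

lemma unif_cont: assumes "T1 \<le> T2" shows "uniformly_continuous_on ({T1..T2} \<times> X) (\<lambda>(t, x). f t x)"
  by (rule compact_uniformly_continuous) (auto intro: continuous_on_subset[OF fcont] compact_Times cX)

lemma time_shift: assumes "\<kappa> > 0" shows "\<exists>\<rho>>0. \<forall>z\<in>X. \<forall>h. \<bar>h\<bar> < \<rho> \<longrightarrow> dist (f h z) z < \<kappa>"
proof -
  obtain d where d: "d > 0" and H: "\<forall>p\<in>{-1..1} \<times> X. \<forall>q\<in>{-1..1} \<times> X. dist q p < d \<longrightarrow>
      dist ((\<lambda>(t, x). f t x) q) ((\<lambda>(t, x). f t x) p) < \<kappa>"
    using unif_cont[of "-1" 1] assms unfolding uniformly_continuous_on_def by force
  show ?thesis
  proof (intro exI[of _ "min d 1"] conjI ballI allI impI)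
    fix z h assume z: "z \<in> X" and h: "\<bar>h\<bar> < min d 1"
    have "dist (h, z) (0, z) < d" using h by (simp add: dist_Pair_Pair dist_real_def)
    have "h \<in> {-1..1}" using h by auto
    then have "dist (f h z) (f 0 z) < \<kappa>" using H[rule_format, of "(0,z)" "(h,z)"] z \<open>dist (h, z) (0, z) < d\<close> by auto
    then show "dist (f h z) z < \<kappa>" using f_0 z by simp
  qed (use d in auto)
qed

lemma sep_bound: assumes "T \<ge> 0" "\<epsilon> > 0"
  shows "\<exists>N. \<forall>t\<in>{0..T}. \<forall>E. E \<subseteq> X \<longrightarrow> separated f t \<epsilon> E \<longrightarrow> finite E \<and> card E \<le> N"
proof -
  obtain d where d: "d > 0" and H: "\<forall>p\<in>{0..T} \<times> X. \<forall>q\<in>{0..T} \<times> X. dist q p < d \<longrightarrow>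
      dist ((\<lambda>(t, x). f t x) q) ((\<lambda>(t, x). f t x) p) < \<epsilon>"
    using unif_cont[of 0 T] assms unfolding uniformly_continuous_on_def by force
  have close: "bowen_dist f t x y \<le> \<epsilon>" if "x \<in> X" "y \<in> X" "dist x y < d" "t \<in> {0..T}" for x y t
  proof (rule bd_le)
    show "dist (f s x) (f s y) \<le> \<epsilon>" if "s \<in> {0..t}" for s
    proof -
      have "dist (s, x) (s, y) < d" using \<open>dist x y < d\<close> by (simp add: dist_Pair_Pair)
      then have "dist (f s x) (f s y) < \<epsilon>" using H[rule_format, of "(s,y)" "(s,x)"] that \<open>x \<in> X\<close> \<open>y \<in> X\<close> \<open>t \<in> {0..T}\<close> by auto
      then show ?thesis by simp
    qed
  qed (use that in auto)
  have "X \<subseteq> (\<Union>c\<in>X. ball c (d/2))" using d by auto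
  then obtain K where K: "K \<subseteq> X" "finite K" "X \<subseteq> (\<Union>c\<in>K. ball c (d/2))"
    using compactE_image[OF cX, of X "\<lambda>c. ball c (d/2)"] by auto
  show ?thesis
  proof (intro exI[of _ "card K"] ballI allI impI)
    fix t E assume t: "t \<in> {0..T}" and EX: "E \<subseteq> X" and sep: "separated f t \<epsilon> E"
    define ctr where "ctr x = (SOME c. c \<in> K \<and> x \<in> ball c (d/2))" for x
    have ctr: "ctr x \<in> K \<and> x \<in> ball (ctr x) (d/2)" if xX: "x \<in> X" for x
    proof -
      obtain c where "c \<in> K" "x \<in> ball c (d/2)" using K(3) xX by blast
      then have "c \<in> K \<and> x \<in> ball c (d/2)" by blast
      then show ?thesis unfolding ctr_def by (rule someI)
    qed
    have inj: "inj_on ctr E"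
    proof (rule inj_onI)
      fix x y assume xy: "x \<in> E" "y \<in> E" "ctr x = ctr y"
      have "x \<in> X" "y \<in> X" using xy EX by auto
      then have "dist (ctr x) x < d/2" "dist (ctr y) y < d/2" using ctr by auto
      moreover have "dist (ctr x) y < d/2" using xy(3) \<open>dist (ctr y) y < d/2\<close> by simp
      ultimately have "dist x y < d" using dist_triangle[of x y "ctr x"] dist_commute[of x "ctr x"] by linarith
      then have "bowen_dist f t x y \<le> \<epsilon>" using close xy EX t by blast
      then show "x = y" using sep xy unfolding separated_def by force
    qed
    have im: "ctr ` E \<subseteq> K" using ctr EX by auto
    show "finite E \<and> card E \<le> card K"
      using inj_on_finite[OF inj im K(2)] card_inj_on_le[OF inj im K(2)] by simp
  qed
qed

lemma sep_mono: "separated f T \<delta>2 E \<Longrightarrow> \<delta>1 \<le> \<delta>2 \<Longrightarrow> separated f T \<delta>1 E"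
  unfolding separated_def by force

abbreviation "LX \<delta> T \<equiv> Lambda X f \<phi> (X \<times> {0..}) \<delta> 0 T"

lemma LX_bdd: assumes "\<delta> > 0"
  shows "bdd_above {(\<Sum>x\<in>E. exp (Phi X f \<phi> 0 x T)) | E. finite E \<and> E \<subseteq> {x. (x, T) \<in> X \<times> {0..}} \<and> separated f T \<delta> E}"
proof (cases "T \<ge> 0")
  case True
  obtain N where N: "\<forall>t\<in>{0..T}. \<forall>E. E \<subseteq> X \<longrightarrow> separated f t \<delta> E \<longrightarrow> finite E \<and> card E \<le> N"
    using sep_bound[OF True assms] by blast
  show ?thesis
  proof (rule bdd_aboveI, clarify)
    fix E assume E: "finite E" "E \<subseteq> {x. (x, T) \<in> X \<times> {0..}}" "separated f T \<delta> E"
    have EX: "E \<subseteq> X" using E by auto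
    have "(\<Sum>x\<in>E. exp (Phi X f \<phi> 0 x T)) \<le> of_nat (card E) * exp (T * M)"
      by (rule sum_bounded_above) (use Phi_le EX True in auto)
    also have "\<dots> \<le> of_nat N * exp (T * M)"
      using N[rule_format, of T E] EX E True by (intro mult_right_mono) auto
    finally show "(\<Sum>x\<in>E. exp (Phi X f \<phi> 0 x T)) \<le> of_nat N * exp (T * M)" .
  qed
next
  case False
  then show ?thesis by (intro bdd_aboveI[of _ 0]) auto
qed

lemma LX_upper: assumes "\<delta> > 0" "T \<ge> 0" "finite E" "E \<subseteq> X" "separated f T \<delta> E"
  shows "(\<Sum>x\<in>E. exp (Phi X f \<phi> 0 x T)) \<le> LX \<delta> T"
  unfolding Lambda_def by (rule cSup_upper[OF _ LX_bdd[OF assms(1)]]) (use assms in auto)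

lemma LX_pos: assumes "X \<noteq> {}" "\<delta> > 0" "T \<ge> 0" shows "0 < LX \<delta> T"
proof -
  obtain x0 where "x0 \<in> X" using assms by auto
  then have "(\<Sum>x\<in>{x0}. exp (Phi X f \<phi> 0 x T)) \<le> LX \<delta> T"
    using assms by (intro LX_upper) (auto simp: separated_def)
  then show ?thesis by (simp add: less_le_trans[OF exp_gt_zero])
qed

lemma LX_mono: assumes "0 < \<delta>1" "\<delta>1 \<le> \<delta>2" shows "LX \<delta>2 T \<le> LX \<delta>1 T"
  unfolding Lambda_def
proof (rule cSup_subset_mono)
  show "{(\<Sum>x\<in>E. exp (Phi X f \<phi> 0 x T)) | E. finite E \<and> E \<subseteq> {x. (x, T) \<in> X \<times> {0..}} \<and> separated f T \<delta>2 E} \<noteq> {}"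
    by (auto simp: separated_def intro!: exI[of _ "{}"])
next
  show "bdd_above {(\<Sum>x\<in>E. exp (Phi X f \<phi> 0 x T)) | E. finite E \<and> E \<subseteq> {x. (x, T) \<in> X \<times> {0..}} \<and> separated f T \<delta>1 E}"
    using LX_bdd assms by simp
next
  show "{(\<Sum>x\<in>E. exp (Phi X f \<phi> 0 x T)) | E. finite E \<and> E \<subseteq> {x. (x, T) \<in> X \<times> {0..}} \<and> separated f T \<delta>2 E} \<subseteq>
    {(\<Sum>x\<in>E. exp (Phi X f \<phi> 0 x T)) | E. finite E \<and> E \<subseteq> {x. (x, T) \<in> X \<times> {0..}} \<and> separated f T \<delta>1 E}"
    using sep_mono[OF _ assms(2)] by blast
qed

definition gg :: "real \<Rightarrow> ereal" where
  "gg \<delta> = Limsup at_top (\<lambda>T::real. ereal (ln (LX \<delta> T) / T))"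

lemma gg_anti: assumes "X \<noteq> {}" "0 < \<delta>1" "\<delta>1 \<le> \<delta>2" shows "gg \<delta>2 \<le> gg \<delta>1"
  unfolding gg_def
proof (rule Limsup_mono)
  show "\<forall>\<^sub>F T in at_top. ereal (ln (LX \<delta>2 T) / T) \<le> ereal (ln (LX \<delta>1 T) / T)"
    using eventually_ge_at_top[of "1::real"]
  proof (rule eventually_mono)
    fix T :: real assume "1 \<le> T"
    have p: "0 < LX \<delta>2 T" using assms \<open>1 \<le> T\<close> by (intro LX_pos) auto
    have m: "LX \<delta>2 T \<le> LX \<delta>1 T" using LX_mono[OF assms(2,3)] .
    have "ln (LX \<delta>2 T) \<le> ln (LX \<delta>1 T)" using m p by (rule ln_mono)
    then show "ereal (ln (LX \<delta>2 T) / T) \<le> ereal (ln (LX \<delta>1 T) / T)"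
      using \<open>1 \<le> T\<close> by (simp add: divide_right_mono)
  qed
qed

lemma pressure_ge: assumes "X \<noteq> {}" "\<epsilon> > 0" shows "gg \<epsilon> \<le> top_pressure X f \<phi>"
proof -
  define L where "L = (SUP \<delta>\<in>{0<..}. gg \<delta>)"
  have up: "gg y \<le> L" if "0 < y" for y unfolding L_def by (rule SUP_upper) (use that in simp)
  have "(gg \<longlongrightarrow> L) (at_right 0)"
  proof (rule order_tendstoI)
    fix a assume "a < L"
    then obtain d where d: "d > 0" "a < gg d" unfolding L_def by (auto simp: less_SUP_iff)
    have "a < gg y" if "0 < y" "y < d" for y
    proof -
      have "gg d \<le> gg y" using gg_anti[OF assms(1), of y d] that by simp
      then show ?thesis using d(2) by (rule less_le_trans[rotated])
    qed
    then show "\<forall>\<^sub>F x in at_right 0. a < gg x" unfolding eventually_at_right_field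
      using d(1) by blast
  next
    fix a assume "L < a"
    have "gg y < a" if "0 < y" for y using up[OF that] \<open>L < a\<close> by (rule le_less_trans)
    then show "\<forall>\<^sub>F x in at_right 0. gg x < a" unfolding eventually_at_right_field
      by (intro exI[of _ 1]) simp
  qed
  moreover have "top_pressure X f \<phi> = Lim (at_right 0) gg"
    unfolding top_pressure_def gg_def ..
  ultimately have "top_pressure X f \<phi> = L"
    using tendsto_Lim[OF trivial_limit_at_right_real] by simp
  then show ?thesis using up assms(2) by simp
qed
end


lemma int_mono_upper:
  fixes g :: "real \<Rightarrow> real"
  assumes "continuous_on UNIV g" "\<And>s. 0 \<le> g s" "0 \<le> b" "b \<le> T"
  shows "integral {0..b} g \<le> integral {0..T} g"
proof -
  have i: "g integrable_on {u..v}" for u v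
    by (rule integrable_continuous_interval) (auto intro: continuous_on_subset[OF assms(1)])
  have "integral {0..b} g + integral {b..T} g = integral {0..T} g"
    using assms i by (intro Henstock_Kurzweil_Integration.integral_combine) auto
  moreover have "0 \<le> integral {b..T} g" using i assms by (intro integral_nonneg) auto
  ultimately show ?thesis by linarith
qed

lemma seg_int:
  fixes g :: "real \<Rightarrow> real" and a :: "nat \<Rightarrow> real"
  assumes cg: "continuous_on UNIV g" and g0: "\<And>s. 0 \<le> g s" and t: "0 \<le> t" and a0: "0 \<le> a 0"
    and step: "\<And>j. Suc j < n \<Longrightarrow> a j + t \<le> a (Suc j)"
  shows "n \<ge> 1 \<Longrightarrow> (\<Sum>j<n. integral {a j..a j + t} g) \<le> integral {0..a (n - 1) + t} g"
  using step
proof (induction n)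
  case 0 then show ?case by simp
next
  case (Suc n)
  have i: "g integrable_on {u..v}" for u v
    by (rule integrable_continuous_interval) (auto intro: continuous_on_subset[OF cg])
  show ?case
  proof (cases "n = 0")
    case True
    have "integral {a 0..a 0 + t} g \<le> integral {0..a 0} g + integral {a 0..a 0 + t} g"
      using i g0 by (simp add: integral_nonneg)
    also have "\<dots> = integral {0..a 0 + t} g" using a0 t i by (intro Henstock_Kurzweil_Integration.integral_combine) auto
    finally show ?thesis using True by simp
  next
    case False
    have stp: "\<And>j. Suc j < Suc n \<Longrightarrow> a j + t \<le> a (Suc j)" using Suc.prems by blast
    have nonneg: "0 \<le> a j" if "j < Suc n" for j
      using that
    proof (induction j)
      case 0 show ?case using a0 .
    next
      case (Suc j)
      have "a j + t \<le> a (Suc j)" using stp Suc.prems by blast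
      moreover have "0 \<le> a j" using Suc.IH Suc.prems by simp
      ultimately show ?case using t by linarith
    qed
    have an: "0 \<le> a (n - 1) + t" using nonneg[of "n - 1"] t by simp
    have st: "a (n - 1) + t \<le> a n" using stp[of "n - 1"] False by simp
    have IH: "(\<Sum>j<n. integral {a j..a j + t} g) \<le> integral {0..a (n - 1) + t} g"
      using Suc.IH Suc.prems False by auto
    have "(\<Sum>j<Suc n. integral {a j..a j + t} g) = (\<Sum>j<n. integral {a j..a j + t} g) + integral {a n..a n + t} g"
      by simp
    also have "\<dots> \<le> integral {0..a (n - 1) + t} g + integral {a (n - 1) + t..a n} g + integral {a n..a n + t} g"
    proof -
      have "0 \<le> integral {a (n - 1) + t..a n} g" using i g0 by (intro integral_nonneg) auto
      then show ?thesis using IH by simp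
    qed
    also have "integral {0..a (n - 1) + t} g + integral {a (n - 1) + t..a n} g = integral {0..a n} g"
      using an st i by (intro Henstock_Kurzweil_Integration.integral_combine) auto
    also have "integral {0..a n} g + integral {a n..a n + t} g = integral {0..a n + t} g"
      using an st t i by (intro Henstock_Kurzweil_Integration.integral_combine) auto
    finally show ?thesis by simp
  qed
qed

lemma sum_lists_prod:
  fixes h :: "'a \<Rightarrow> real"
  assumes "finite E"
  shows "(\<Sum>xs\<in>{xs. set xs \<subseteq> E \<and> length xs = n}. \<Prod>j<n. h (xs ! j)) = (sum h E) ^ n"
proof (induction n)
  case 0
  have "{xs. set xs \<subseteq> E \<and> length xs = 0} = {[]}" by auto
  then show ?case by simp
next
  case (Suc n)
  let ?L = "\<lambda>n. {xs. set xs \<subseteq> E \<and> length xs = n}"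
  have eq: "?L (Suc n) = (\<lambda>(x, xs). x # xs) ` (E \<times> ?L n)"
  proof
    show "?L (Suc n) \<subseteq> (\<lambda>(x, xs). x # xs) ` (E \<times> ?L n)"
    proof
      fix ys assume "ys \<in> ?L (Suc n)"
      then obtain x xs where "ys = x # xs" "x \<in> E" "xs \<in> ?L n" by (cases ys) auto
      then show "ys \<in> (\<lambda>(x, xs). x # xs) ` (E \<times> ?L n)" by force
    qed
  qed auto
  have inj: "inj_on (\<lambda>(x, xs). x # xs) (E \<times> ?L n)" by (auto simp: inj_on_def)
  have "(\<Sum>xs\<in>?L (Suc n). \<Prod>j<Suc n. h (xs ! j)) = (\<Sum>p\<in>E \<times> ?L n. \<Prod>j<Suc n. h ((fst p # snd p) ! j))"
    unfolding eq by (subst sum.reindex[OF inj]) (simp add: case_prod_beta)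
  also have "\<dots> = (\<Sum>p\<in>E \<times> ?L n. h (fst p) * (\<Prod>j<n. h (snd p ! j)))"
    by (simp del: prod.lessThan_Suc add: prod.lessThan_Suc_shift)
  also have "\<dots> = (\<Sum>x\<in>E. \<Sum>xs\<in>?L n. h x * (\<Prod>j<n. h (xs ! j)))"
    by (simp add: sum.cartesian_product case_prod_beta)
  also have "\<dots> = (\<Sum>x\<in>E. h x * (sum h E) ^ n)" by (simp add: sum_distrib_left[symmetric] Suc.IH)
  also have "\<dots> = (sum h E) ^ Suc n" by (simp add: sum_distrib_right)
  finally show ?case .
qed

lemma floor_close:
  fixes a b \<rho> :: real
  assumes "0 \<le> a" "0 \<le> b" "0 < \<rho>" "nat \<lfloor>a / \<rho>\<rfloor> = nat \<lfloor>b / \<rho>\<rfloor>"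
  shows "\<bar>a - b\<bar> < \<rho>"
proof -
  have "0 \<le> \<lfloor>a / \<rho>\<rfloor>" "0 \<le> \<lfloor>b / \<rho>\<rfloor>" using assms by simp_all
  then have e: "\<lfloor>a / \<rho>\<rfloor> = \<lfloor>b / \<rho>\<rfloor>" using assms(4) eq_nat_nat_iff by blast
  define k where "k = \<lfloor>b / \<rho>\<rfloor>"
  have 1: "of_int k \<le> a / \<rho>" "a / \<rho> < of_int k + 1"
    unfolding k_def e[symmetric] by (rule of_int_floor_le, rule real_of_int_floor_add_one_gt)
  have 2: "of_int k \<le> b / \<rho>" "b / \<rho> < of_int k + 1"
    unfolding k_def by (rule of_int_floor_le, rule real_of_int_floor_add_one_gt)
  have 3: "a / \<rho> - b / \<rho> < 1" "-1 < a / \<rho> - b / \<rho>" using 1 2 by linarith+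
  have "a = (a / \<rho>) * \<rho>" "b = (b / \<rho>) * \<rho>" using assms(3) by simp_all
  then have "a - b = (a / \<rho> - b / \<rho>) * \<rho>" by (metis left_diff_distrib)
  moreover have "(a / \<rho> - b / \<rho>) * \<rho> < \<rho>" "- \<rho> < (a / \<rho> - b / \<rho>) * \<rho>"
    using 3 assms(3) mult_strict_right_mono[of _ _ \<rho>] by fastforce+
  ultimately show ?thesis by (simp add: abs_less_iff)
qed

lemma Limsup_ge_frequent:
  fixes h :: "real \<Rightarrow> ereal"
  assumes "\<And>N. \<exists>T\<ge>N. a \<le> h T"
  shows "a \<le> Limsup at_top h"
  unfolding Limsup_def
proof (rule INF_greatest)
  fix P :: "real \<Rightarrow> bool" assume "P \<in> {P. eventually P at_top}"
  then have "eventually P at_top" by simp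
  then obtain N where N0: "\<forall>T\<ge>N. P T" using eventually_at_top_linorder[of P] by (metis (full_types))
  then have N: "\<And>T. T \<ge> N \<Longrightarrow> P T" by blast
  obtain T where T: "T \<ge> N" "a \<le> h T" using assms by blast
  have "h T \<le> (SUP x\<in>Collect P. h x)" by (rule SUP_upper) (use N T in simp)
  then show "a \<le> (SUP x\<in>Collect P. h x)" using T(2) by (rule order_trans[rotated])
qed



context flowsys begin

lemma bowen_lemmas:
  assumes bow: "\<forall>(x, t)\<in>G. \<forall>y\<in>bowen_ball X f t x r. \<bar>Phi X f \<phi> 0 x t - Phi X f \<phi> 0 y t\<bar> \<le> K"
    and GX: "G \<subseteq> X \<times> {0..}" and at: "(a, t) \<in> G" and r0: "0 < r"
  shows "\<eta> \<le> r \<Longrightarrow> Phi X f \<phi> \<eta> a t \<le> Phi X f \<phi> 0 a t + K"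
    and "z \<in> X \<Longrightarrow> bowen_dist f t a z < r \<Longrightarrow> Phi X f \<phi> 0 a t - K \<le> Phi X f \<phi> 0 z t"
proof -
  have aX: "a \<in> X" and t: "t \<ge> 0" using at GX by auto
  have B: "\<bar>Phi X f \<phi> 0 a t - Phi X f \<phi> 0 z t\<bar> \<le> K" if "z \<in> X" "bowen_dist f t a z < r" for z
    using bow at that unfolding bowen_ball_def by fastforce
  show "Phi X f \<phi> 0 a t - K \<le> Phi X f \<phi> 0 z t" if "z \<in> X" "bowen_dist f t a z < r"
    using B[OF that] by linarith
  assume "\<eta> \<le> r"
  show "Phi X f \<phi> \<eta> a t \<le> Phi X f \<phi> 0 a t + K"
    unfolding Phi_def[of X f \<phi> \<eta>]
  proof (rule cSUP_least)
    fix z assume z: "z \<in> insert a (bowen_ball X f t a \<eta>)"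
    show "integral {0..t} (\<lambda>s. \<phi> (f s z)) \<le> Phi X f \<phi> 0 a t + K"
    proof (cases "z = a")
      case True
      have "bowen_dist f t a a < r" using bd_self[OF t] r0 by simp
      then have "0 \<le> K" using B[OF aX] by simp
      then show ?thesis using True Phi0[OF aX t] by simp
    next
      case False
      then have zX: "z \<in> X" "bowen_dist f t a z < r" using z \<open>\<eta> \<le> r\<close> unfolding bowen_ball_def by auto
      show ?thesis using B[OF zX] Phi0[OF zX(1) t] by linarith
    qed
  qed simp
qed

lemma key_est:
  fixes G :: "('a \<times> real) set" and tau :: "('a \<times> real) list \<Rightarrow> nat \<Rightarrow> real"
  assumes GX: "G \<subseteq> X \<times> {0..}" and \<delta>: "\<delta> > 0" and \<gamma>: "\<gamma> > 2 * \<delta>" and \<eta>: "\<eta> \<ge> 0"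
    and T0: "T0 > 0" and \<tau>: "\<tau> > 0"
    and spec: "\<forall>ps. set ps \<subseteq> G \<inter> (X \<times> {T0..}) \<longrightarrow>
           (\<forall>i. i + 1 < length ps \<longrightarrow> tau ps i \<in> {0..\<tau>}) \<and>
           (\<exists>y\<in>X. \<forall>j<length ps.
              bowen_dist f (snd (ps ! j))
                 (f (\<Sum>i<j. snd (ps ! i) + tau ps i) y) (fst (ps ! j)) < \<delta>)"
    and cons: "\<forall>ps qs j. set ps \<subseteq> G \<inter> (X \<times> {T0..}) \<longrightarrow> set qs \<subseteq> G \<inter> (X \<times> {T0..}) \<longrightarrow> take j ps = take j qs \<longrightarrow>
           (\<forall>i. i + 1 < j \<longrightarrow> tau ps i = tau qs i)"
    and bow: "\<forall>(x, t)\<in>G. \<forall>y\<in>bowen_ball X f t x (max (\<gamma> / 2) \<eta>). \<bar>Phi X f \<phi> 0 x t - Phi X f \<phi> 0 y t\<bar> \<le> K"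
    and \<rho>: "\<rho> > 0" "\<forall>z\<in>X. \<forall>h. \<bar>h\<bar> < \<rho> \<longrightarrow> dist (f h z) z < (\<gamma> - 2 * \<delta>) / 2"
    and t: "t \<ge> T0" and E: "finite E" "E \<subseteq> {x. (x, t) \<in> G}" "separated f t \<gamma> E" "E \<noteq> {}"
    and n: "n \<ge> 1"
  shows "exp (- (n * (2 * K + \<tau> * M))) * (\<Sum>x\<in>E. exp (Phi X f \<phi> \<eta> x t)) ^ n
           \<le> (real (nat \<lfloor>\<tau> / \<rho>\<rfloor>) + 1) ^ n * LX ((\<gamma> - 2 * \<delta>) / 2) (n * (t + \<tau>))"
proof -
  define \<epsilon> where "\<epsilon> = (\<gamma> - 2 * \<delta>) / 2"
  have \<epsilon>0: "\<epsilon> > 0" using \<gamma> unfolding \<epsilon>_def by simp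
  define T where "T = n * (t + \<tau>)"
  define r where "r = max (\<gamma> / 2) \<eta>"
  have r0: "r > 0" using \<gamma> \<delta> unfolding r_def by simp
  have t0: "t \<ge> 0" using t T0 by simp
  have T0': "T \<ge> 0" using t0 \<tau> unfolding T_def by simp
  have EX: "E \<subseteq> X" and EG: "\<And>x. x \<in> E \<Longrightarrow> (x, t) \<in> G" using E GX by auto
  define D where "D = G \<inter> (X \<times> {T0..})"
  define XS where "XS = {xs. set xs \<subseteq> E \<and> length xs = n}"
  define ps where "ps xs = map (\<lambda>x. (x, t)) xs" for xs :: "'a list"
  have psD: "set (ps xs) \<subseteq> G \<inter> (X \<times> {T0..})" if "xs \<in> XS" for xs
    using that EG EX t unfolding XS_def ps_def by auto
  have len_ps: "length (ps xs) = length xs" for xs unfolding ps_def by simp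
  define st where "st xs j = (\<Sum>i<j. t + tau (ps xs) i)" for xs j
  define good where "good xs y \<longleftrightarrow> y \<in> X \<and> (\<forall>j<n. bowen_dist f t (f (st xs j) y) (xs ! j) < \<delta>)" for xs y
  define yy where "yy xs = (SOME y. good xs y)" for xs
  have tauR: "tau (ps xs) i \<in> {0..\<tau>}" if "xs \<in> XS" "i + 1 < n" for xs i
    using spec[rule_format, OF psD[OF that(1)]] that unfolding XS_def len_ps by auto
  have yy: "good xs (yy xs)" if xs: "xs \<in> XS" for xs
  proof -
    obtain y where y: "y \<in> X" "\<forall>j<length (ps xs). bowen_dist f (snd (ps xs ! j))
                 (f (\<Sum>i<j. snd (ps xs ! i) + tau (ps xs) i) y) (fst (ps xs ! j)) < \<delta>"
      using spec[rule_format, OF psD[OF xs]] by blast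
    have "good xs y" unfolding good_def
    proof (intro conjI allI impI)
      fix j assume j: "j < n"
      have ln: "length xs = n" using xs unfolding XS_def by simp
      have "(\<Sum>i<j. snd (ps xs ! i) + tau (ps xs) i) = st xs j"
        unfolding st_def by (rule sum.cong) (use j ln in \<open>auto simp: ps_def\<close>)
      then show "bowen_dist f t (f (st xs j) y) (xs ! j) < \<delta>"
        using y(2)[rule_format, of j] j ln by (simp add: ps_def len_ps)
    qed (rule y(1))
    then show ?thesis unfolding yy_def by (rule someI)
  qed
  have yyX: "yy xs \<in> X" if "xs \<in> XS" for xs using yy[OF that] unfolding good_def by simp
  have st_nonneg: "0 \<le> st xs j" if "xs \<in> XS" "j < n" for xs j
    unfolding st_def by (rule sum_nonneg) (use tauR[OF that(1)] that t0 in auto)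
  have st_le: "st xs j + t \<le> T" if "xs \<in> XS" "j < n" for xs j
  proof -
    have "st xs j \<le> of_nat (card {..<j}) * (t + \<tau>)"
      unfolding st_def by (rule sum_bounded_above) (use tauR[OF that(1)] that in auto)
    then have "st xs j + t \<le> real j * (t + \<tau>) + (t + \<tau>)" using \<tau> by simp
    also have "\<dots> = real (Suc j) * (t + \<tau>)" by (simp add: algebra_simps)
    also have "\<dots> \<le> T" unfolding T_def using that t0 \<tau> by (intro mult_right_mono) auto
    finally show ?thesis .
  qed
  have st_Suc: "st xs (Suc j) = st xs j + (t + tau (ps xs) j)" for xs j
    unfolding st_def by simp
  have wt: "(\<Sum>j<n. Phi X f \<phi> \<eta> (xs ! j) t) - n * (2 * K + \<tau> * M) \<le> Phi X f \<phi> 0 (yy xs) T"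
    if xs: "xs \<in> XS" for xs
  proof -
    define y where "y = yy xs"
    have yX: "y \<in> X" unfolding y_def using yyX[OF xs] .
    have lx: "length xs = n" using xs unfolding XS_def by simp
    define g where "g s = \<phi> (f s y) + M" for s
    have cg: "continuous_on UNIV g" unfolding g_def by (intro continuous_intros phi_orbit_cont[OF yX])
    have g0: "0 \<le> g s" for s using Mb[OF f_in[OF yX, of s]] unfolding g_def by linarith
    have gi: "g integrable_on {u..v}" for u v
      by (rule integrable_continuous_interval) (auto intro: continuous_on_subset[OF cg])
    have seg: "(\<Sum>j<n. integral {st xs j..st xs j + t} g) \<le> integral {0..st xs (n - 1) + t} g"
    proof (rule seg_int[OF cg g0 t0 _ _ n])
      show "0 \<le> st xs 0" by (simp add: st_def)
      fix j assume "Suc j < n"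
      then have "0 \<le> tau (ps xs) j" using tauR[OF xs, of j] by simp
      then show "st xs j + t \<le> st xs (Suc j)" using st_Suc[of xs j] by simp
    qed
    also have "\<dots> \<le> integral {0..T} g"
      using n st_nonneg[OF xs, of "n - 1"] st_le[OF xs, of "n - 1"] t0
      by (intro int_mono_upper[OF cg g0]) auto
    finally have seg2: "(\<Sum>j<n. integral {st xs j..st xs j + t} g) \<le> integral {0..T} g" .
    have int_g: "integral {a..a + L} g = integral {0..L} (\<lambda>s. \<phi> (f s (f a y))) + L * M" if "L \<ge> 0" for a L
    proof -
      have "integral {a..a + L} g = integral {a..a + L} (\<lambda>s. \<phi> (f s y)) + integral {a..a + L} (\<lambda>s. M)"
        unfolding g_def by (rule Henstock_Kurzweil_Integration.integral_add) (auto intro: phi_orbit_int[OF yX])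
      also have "integral {a..a + L} (\<lambda>s. M) = L * M" using that by simp
      also have "integral {a..a + L} (\<lambda>s. \<phi> (f s y)) = integral {a - a..a + L - a} (\<lambda>s. \<phi> (f (s + a) y))"
        by (rule integral_shift_real_ivl[symmetric])
      also have "\<dots> = integral {0..L} (\<lambda>s. \<phi> (f s (f a y)))" using f_add[OF yX] by simp
      finally show ?thesis .
    qed
    have segj: "integral {st xs j..st xs j + t} g = Phi X f \<phi> 0 (f (st xs j) y) t + t * M" for j
      using int_g[OF t0, of "st xs j"] Phi0[OF f_in[OF yX] t0] by simp
    have intT: "integral {0..T} g = Phi X f \<phi> 0 y T + T * M"
      using int_g[OF T0', of 0] Phi0[OF yX T0'] f_0[OF yX] by simp
    have bj: "Phi X f \<phi> \<eta> (xs ! j) t \<le> Phi X f \<phi> 0 (f (st xs j) y) t + 2 * K" if j: "j < n" for j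
    proof -
      have xj: "(xs ! j, t) \<in> G" using EG xs j lx nth_mem unfolding XS_def by blast
      have b1: "Phi X f \<phi> \<eta> (xs ! j) t \<le> Phi X f \<phi> 0 (xs ! j) t + K"
        using bowen_lemmas(1)[OF bow GX xj] \<gamma> \<delta> by fastforce
      have "bowen_dist f t (f (st xs j) y) (xs ! j) < \<delta>" using yy[OF xs] j unfolding good_def y_def by blast
      then have "bowen_dist f t (xs ! j) (f (st xs j) y) < max (\<gamma> / 2) \<eta>" using bd_sym \<gamma> by fastforce
      then have b2: "Phi X f \<phi> 0 (xs ! j) t - K \<le> Phi X f \<phi> 0 (f (st xs j) y) t"
        using bowen_lemmas(2)[OF bow GX xj _ f_in[OF yX]] \<gamma> \<delta> by fastforce
      show ?thesis using b1 b2 by linarith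
    qed
    have "(\<Sum>j<n. Phi X f \<phi> \<eta> (xs ! j) t) \<le> (\<Sum>j<n. integral {st xs j..st xs j + t} g - t * M + 2 * K)"
      by (rule sum_mono) (use bj segj in simp)
    also have "\<dots> = (\<Sum>j<n. integral {st xs j..st xs j + t} g) - n * (t * M) + n * (2 * K)"
      by (simp add: sum_subtractf sum.distrib)
    also have "\<dots> \<le> Phi X f \<phi> 0 y T + T * M - n * (t * M) + n * (2 * K)" using seg2 intT by simp
    finally have fin: "(\<Sum>j<n. Phi X f \<phi> \<eta> (xs ! j) t) \<le> Phi X f \<phi> 0 y T + T * M - n * (t * M) + n * (2 * K)" .
    have "T * M - n * (t * M) = n * (\<tau> * M)" unfolding T_def by (simp add: algebra_simps)
    then have "(\<Sum>j<n. Phi X f \<phi> \<eta> (xs ! j) t) - n * (2 * K + \<tau> * M) \<le> Phi X f \<phi> 0 y T"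
      using fin by (simp add: algebra_simps)
    then show ?thesis unfolding y_def .
  qed
  define Mc where "Mc = nat \<lfloor>\<tau> / \<rho>\<rfloor>"
  define cell where "cell xs = map (\<lambda>i. nat \<lfloor>tau (ps xs) i / \<rho>\<rfloor>) [0..<n - 1]" for xs
  define Cells where "Cells = {l. set l \<subseteq> {0..Mc} \<and> length l = n - 1}"
  have core: "\<epsilon> < bowen_dist f T (yy xs) (yy qs)"
    if xs: "xs \<in> XS" and qs: "qs \<in> XS" and ce: "cell xs = cell qs" and ne: "xs \<noteq> qs" for xs qs
  proof -
    have lx: "length xs = n" and lq: "length qs = n" using xs qs unfolding XS_def by auto
    have "\<exists>j<n. xs ! j \<noteq> qs ! j"
    proof (rule ccontr)
      assume "\<not> ?thesis"
      then have "xs = qs" using lx lq by (intro nth_equalityI) auto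
      then show False using ne by simp
    qed
    define j where "j = (LEAST j. j < n \<and> xs ! j \<noteq> qs ! j)"
    have j: "j < n" "xs ! j \<noteq> qs ! j" using LeastI_ex[OF \<open>\<exists>j<n. xs ! j \<noteq> qs ! j\<close>] unfolding j_def by auto
    have before: "xs ! i = qs ! i" if "i < j" for i
      using not_less_Least[of i "\<lambda>j. j < n \<and> xs ! j \<noteq> qs ! j"] that j(1) unfolding j_def[symmetric] by auto
    have "take j xs = take j qs" using lx lq j(1) before by (intro nth_take_lemma) auto
    then have tk: "take j (ps xs) = take j (ps qs)" unfolding ps_def by (simp add: take_map)
    have teq: "tau (ps xs) i = tau (ps qs) i" if "i + 1 < j" for i
      using cons[rule_format, OF psD[OF xs] psD[OF qs] tk] that by blast
    have sdiff: "\<bar>st xs j - st qs j\<bar> < \<rho>"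
    proof (cases j)
      case 0 then show ?thesis using \<rho> by (simp add: st_def)
    next
      case (Suc j')
      have same: "st xs j' = st qs j'" unfolding st_def by (rule sum.cong) (use teq Suc in auto)
      have j'n: "j' < n - 1" using Suc j(1) by simp
      have "cell xs ! j' = cell qs ! j'" using ce by simp
      then have fl: "nat \<lfloor>tau (ps xs) j' / \<rho>\<rfloor> = nat \<lfloor>tau (ps qs) j' / \<rho>\<rfloor>"
        using j'n unfolding cell_def by simp
      have "tau (ps xs) j' \<in> {0..\<tau>}" "tau (ps qs) j' \<in> {0..\<tau>}"
        using tauR[OF xs] tauR[OF qs] Suc j(1) by auto
      then have "\<bar>tau (ps xs) j' - tau (ps qs) j'\<bar> < \<rho>" using floor_close[OF _ _ \<rho>(1) fl] by auto
      then show ?thesis using same Suc st_Suc by simp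
    qed
    define a where "a = xs ! j"
    define b where "b = qs ! j"
    have aE: "a \<in> E" and bE: "b \<in> E" using j(1) xs qs nth_mem lx lq unfolding a_def b_def XS_def by auto
    have aX: "a \<in> X" and bX: "b \<in> X" using aE bE EX by auto
    have "a \<noteq> b" using j(2) unfolding a_def b_def .
    then have "\<gamma> < bowen_dist f t a b" using E(3) aE bE unfolding separated_def by blast
    then obtain s where s: "s \<in> {0..t}" "\<gamma> < dist (f s a) (f s b)" using bd_gt[OF aX bX t0] by blast
    define y1 where "y1 = yy xs"
    define y2 where "y2 = yy qs"
    define s1 where "s1 = st xs j"
    define s2 where "s2 = st qs j"
    have y1X: "y1 \<in> X" and y2X: "y2 \<in> X" unfolding y1_def y2_def using yyX xs qs by auto
    have g1: "bowen_dist f t (f s1 y1) a < \<delta>" using yy[OF xs] j(1) unfolding good_def y1_def s1_def a_def by blast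
    have g2: "bowen_dist f t (f s2 y2) b < \<delta>" using yy[OF qs] j(1) unfolding good_def y2_def s2_def b_def by blast
    have d1: "dist (f (s + s1) y1) (f s a) < \<delta>"
      using bd_ge[OF f_in[OF y1X, of s1] aX s(1)] g1 f_add[OF y1X, of s s1] by simp
    have d2: "dist (f (s + s2) y2) (f s b) < \<delta>"
      using bd_ge[OF f_in[OF y2X, of s2] bX s(1)] g2 f_add[OF y2X, of s s2] by simp
    have "f (s + s2) y2 = f (s2 - s1) (f (s + s1) y2)"
      using f_add[OF y2X, of "s2 - s1" "s + s1"] by (simp add: add.commute)
    moreover have "\<bar>s2 - s1\<bar> < \<rho>" using sdiff unfolding s1_def s2_def by linarith
    ultimately have d3: "dist (f (s + s2) y2) (f (s + s1) y2) < \<epsilon>"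
      using \<rho>(2) f_in[OF y2X] unfolding \<epsilon>_def by metis
    have r: "s + s1 \<in> {0..T}" using s(1) st_nonneg[OF xs j(1)] st_le[OF xs j(1)] unfolding s1_def by auto
    have tri1: "dist (f s a) (f s b) \<le> dist (f s a) (f (s + s1) y1) + dist (f (s + s1) y1) (f s b)"
      by (rule dist_triangle)
    have tri2: "dist (f (s + s1) y1) (f s b) \<le> dist (f (s + s1) y1) (f (s + s1) y2) + dist (f (s + s1) y2) (f s b)"
      by (rule dist_triangle)
    have tri3: "dist (f (s + s1) y2) (f s b) \<le> dist (f (s + s1) y2) (f (s + s2) y2) + dist (f (s + s2) y2) (f s b)"
      by (rule dist_triangle)
    have "\<epsilon> < dist (f (s + s1) y1) (f (s + s1) y2)"
      using tri1 tri2 tri3 d1 d2 d3 s(2) dist_commute[of "f s a" "f (s + s1) y1"]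
        dist_commute[of "f (s + s1) y2" "f (s + s2) y2"] unfolding \<epsilon>_def by argo
    also have "\<dots> \<le> bowen_dist f T y1 y2" by (rule bd_ge[OF y1X y2X r])
    finally show ?thesis unfolding y1_def y2_def .
  qed
  have finXS: "finite XS" unfolding XS_def using finite_lists_length_eq[OF E(1)] .
  define w where "w xs = exp (Phi X f \<phi> 0 (yy xs) T)" for xs
  define C where "C l = {xs. xs \<in> XS \<and> cell xs = l}" for l
  have XnE: "X \<noteq> {}" using E(4) EX by blast
  have LXnn: "0 \<le> LX \<epsilon> T" using LX_pos[OF XnE \<epsilon>0 T0'] by simp
  have classb: "sum w (C l) \<le> LX \<epsilon> T" for l
  proof -
    have CX: "C l \<subseteq> XS" unfolding C_def by auto
    have inj: "inj_on yy (C l)"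
    proof (rule inj_onI)
      fix xs qs assume a: "xs \<in> C l" "qs \<in> C l" "yy xs = yy qs"
      show "xs = qs"
      proof (rule ccontr)
        assume "xs \<noteq> qs"
        moreover have "xs \<in> XS" "qs \<in> XS" "cell xs = cell qs" using a unfolding C_def by auto
        ultimately have "\<epsilon> < bowen_dist f T (yy xs) (yy qs)" using core by presburger
        then show False using a(3) bd_self[OF T0'] \<epsilon>0 by simp
      qed
    qed
    have fin: "finite (yy ` C l)" using finite_subset[OF CX finXS] by simp
    have sub: "yy ` C l \<subseteq> X" using yyX CX by blast
    have sep: "separated f T \<epsilon> (yy ` C l)" unfolding separated_def
    proof (intro ballI impI)
      fix u v assume "u \<in> yy ` C l" "v \<in> yy ` C l" "u \<noteq> v"
      then obtain xs qs where o: "xs \<in> C l" "qs \<in> C l" "u = yy xs" "v = yy qs" "xs \<noteq> qs" by blast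
      then have "xs \<in> XS" "qs \<in> XS" "cell xs = cell qs" unfolding C_def by auto
      then show "\<epsilon> < bowen_dist f T u v" using core o(3-5) by presburger
    qed
    have "sum w (C l) = (\<Sum>y\<in>yy ` C l. exp (Phi X f \<phi> 0 y T))"
      unfolding w_def using sum.reindex[OF inj, of "\<lambda>y. exp (Phi X f \<phi> 0 y T)"] by (simp add: o_def)
    also have "\<dots> \<le> LX \<epsilon> T" by (rule LX_upper[OF \<epsilon>0 T0' fin sub sep])
    finally show ?thesis .
  qed
  have cellC: "cell ` XS \<subseteq> Cells"
  proof
    fix l assume "l \<in> cell ` XS"
    then obtain xs where xs: "xs \<in> XS" "l = cell xs" by blast
    have "nat \<lfloor>tau (ps xs) i / \<rho>\<rfloor> \<le> Mc" if "i < n - 1" for i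
    proof -
      have "tau (ps xs) i \<le> \<tau>" using tauR[OF xs(1), of i] that by simp
      then have "tau (ps xs) i / \<rho> \<le> \<tau> / \<rho>" using \<rho>(1) by (simp add: divide_right_mono)
      then show ?thesis unfolding Mc_def by (intro nat_mono floor_mono)
    qed
    then show "l \<in> Cells" unfolding Cells_def xs(2) cell_def by auto
  qed
  have finCells: "finite Cells" unfolding Cells_def by (rule finite_lists_length_eq) simp
  have cardCells: "card Cells = (Mc + 1) ^ (n - 1)" unfolding Cells_def by (simp add: card_lists_length_eq)
  have "sum w XS = (\<Sum>l\<in>Cells. sum w (C l))"
    unfolding C_def by (rule sum.group[OF finXS finCells cellC, symmetric])
  also have "\<dots> \<le> (\<Sum>l\<in>Cells. LX \<epsilon> T)" by (rule sum_mono) (rule classb)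
  also have "\<dots> = real ((Mc + 1) ^ (n - 1)) * LX \<epsilon> T" using cardCells by simp
  also have "\<dots> \<le> (real Mc + 1) ^ n * LX \<epsilon> T"
  proof (rule mult_right_mono[OF _ LXnn])
    have "(real Mc + 1) ^ (n - 1) \<le> (real Mc + 1) ^ n" by (rule power_increasing) auto
    then show "real ((Mc + 1) ^ (n - 1)) \<le> (real Mc + 1) ^ n" by (simp add: add.commute)
  qed
  finally have upper: "sum w XS \<le> (real Mc + 1) ^ n * LX \<epsilon> T" .
  define c1 where "c1 = 2 * K + \<tau> * M"
  define h where "h x = exp (Phi X f \<phi> \<eta> x t)" for x
  have "exp (- (n * c1)) * (sum h E) ^ n = exp (- (n * c1)) * (\<Sum>xs\<in>XS. \<Prod>j<n. h (xs ! j))"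
    unfolding XS_def using sum_lists_prod[OF E(1), of h n] by simp
  also have "\<dots> = (\<Sum>xs\<in>XS. exp (- (n * c1)) * (\<Prod>j<n. h (xs ! j)))" by (simp add: sum_distrib_left)
  also have "\<dots> \<le> sum w XS"
  proof (rule sum_mono)
    fix xs assume xs: "xs \<in> XS"
    have "exp (- (n * c1)) * (\<Prod>j<n. h (xs ! j)) = exp (- (n * c1)) * exp (\<Sum>j<n. Phi X f \<phi> \<eta> (xs ! j) t)"
      unfolding h_def by (simp add: exp_sum)
    also have "\<dots> = exp ((\<Sum>j<n. Phi X f \<phi> \<eta> (xs ! j) t) - n * c1)" by (simp add: mult_exp_exp)
    also have "\<dots> \<le> w xs" unfolding w_def c1_def using wt[OF xs] by simp
    finally show "exp (- (n * c1)) * (\<Prod>j<n. h (xs ! j)) \<le> w xs" .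
  qed
  finally show ?thesis using upper unfolding c1_def h_def \<epsilon>_def T_def Mc_def by simp
qed

end


context flowsys begin

lemma tail_bound:
  fixes G :: "('a \<times> real) set" and tau :: "('a \<times> real) list \<Rightarrow> nat \<Rightarrow> real"
  assumes GX: "G \<subseteq> X \<times> {0..}" and \<delta>: "\<delta> > 0" and \<gamma>: "\<gamma> > 2 * \<delta>" and \<eta>: "\<eta> \<ge> 0"
    and T0: "T0 > 0" and \<tau>: "\<tau> > 0"
    and spec: "\<forall>ps. set ps \<subseteq> G \<inter> (X \<times> {T0..}) \<longrightarrow>
           (\<forall>i. i + 1 < length ps \<longrightarrow> tau ps i \<in> {0..\<tau>}) \<and>
           (\<exists>y\<in>X. \<forall>j<length ps.
              bowen_dist f (snd (ps ! j))
                 (f (\<Sum>i<j. snd (ps ! i) + tau ps i) y) (fst (ps ! j)) < \<delta>)"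
    and cons: "\<forall>ps qs j. set ps \<subseteq> G \<inter> (X \<times> {T0..}) \<longrightarrow> set qs \<subseteq> G \<inter> (X \<times> {T0..}) \<longrightarrow> take j ps = take j qs \<longrightarrow>
           (\<forall>i. i + 1 < j \<longrightarrow> tau ps i = tau qs i)"
    and bow: "\<forall>(x, t)\<in>G. \<forall>y\<in>bowen_ball X f t x (max (\<gamma> / 2) \<eta>). \<bar>Phi X f \<phi> 0 x t - Phi X f \<phi> 0 y t\<bar> \<le> K"
    and \<rho>: "\<rho> > 0" "\<forall>z\<in>X. \<forall>h. \<bar>h\<bar> < \<rho> \<longrightarrow> dist (f h z) z < (\<gamma> - 2 * \<delta>) / 2"
    and t: "t \<ge> T0" and E: "finite E" "E \<subseteq> {x. (x, t) \<in> G}" "separated f t \<gamma> E" "E \<noteq> {}"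
  shows "ereal ((ln (\<Sum>x\<in>E. exp (Phi X f \<phi> \<eta> x t)) - (2 * K + \<tau> * M + ln (real (nat \<lfloor>\<tau> / \<rho>\<rfloor>) + 1))) / (t + \<tau>))
           \<le> gg ((\<gamma> - 2 * \<delta>) / 2)"
proof -
  define S where "S = (\<Sum>x\<in>E. exp (Phi X f \<phi> \<eta> x t))"
  have S0: "S > 0" unfolding S_def using E(1,4) by (intro sum_pos) auto
  define c1 where "c1 = 2 * K + \<tau> * M"
  define m where "m = real (nat \<lfloor>\<tau> / \<rho>\<rfloor>) + 1"
  have m0: "m > 0" unfolding m_def by simp
  define q where "q = exp (- c1) * S / m"
  have q0: "q > 0" unfolding q_def using S0 m0 by simp
  define T1 where "T1 = t + \<tau>"
  have T1: "T1 > 0" using t T0 \<tau> unfolding T1_def by simp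
  define \<epsilon> where "\<epsilon> = (\<gamma> - 2 * \<delta>) / 2"
  have step: "ln q / T1 \<le> ln (LX \<epsilon> (real n * T1)) / (real n * T1)" if n: "n \<ge> 1" for n
  proof -
    have key: "exp (- (n * c1)) * S ^ n \<le> m ^ n * LX \<epsilon> (n * T1)"
      using key_est[OF GX \<delta> \<gamma> \<eta> T0 \<tau> spec cons bow \<rho> t E n] unfolding S_def c1_def m_def \<epsilon>_def T1_def .
    have "exp (- (n * c1)) = exp (- c1) ^ n" using exp_of_nat_mult[of n "- c1"] by simp
    then have "q ^ n = exp (- (n * c1)) * S ^ n / m ^ n" unfolding q_def by (simp add: power_mult_distrib power_divide)
    also have "\<dots> \<le> LX \<epsilon> (n * T1)" using key m0 by (simp add: divide_le_eq mult.commute)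
    finally have qn: "q ^ n \<le> LX \<epsilon> (n * T1)" .
    have qn0: "0 < q ^ n" using q0 by simp
    have "real n * ln q = ln (q ^ n)" by (simp add: ln_realpow)
    also have "\<dots> \<le> ln (LX \<epsilon> (n * T1))" using qn qn0 by (rule ln_mono)
    finally have "real n * ln q \<le> ln (LX \<epsilon> (n * T1))" .
    moreover have e: "ln q / T1 = (real n * ln q) / (real n * T1)" using n by simp
    moreover have p: "real n * T1 > 0" using n T1 by simp
    ultimately show ?thesis using divide_right_mono[of "real n * ln q" "ln (LX \<epsilon> (n * T1))" "real n * T1"]
      by (simp only: e)
  qed
  have "ereal (ln q / T1) \<le> gg \<epsilon>"
    unfolding gg_def
  proof (rule Limsup_ge_frequent)
    fix N :: real
    define n where "n = nat \<lceil>N / T1\<rceil> + 1"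
    have n1: "n \<ge> 1" unfolding n_def by simp
    have "N / T1 \<le> real n" unfolding n_def by linarith
    then have "N \<le> real n * T1" using T1 by (simp add: divide_le_eq)
    then show "\<exists>T\<ge>N. ereal (ln q / T1) \<le> ereal (ln (LX \<epsilon> T) / T)"
      using step[OF n1] by (intro exI[of _ "real n * T1"]) simp
  qed
  moreover have "ln q = ln S - c1 - ln m" unfolding q_def using S0 m0 by (simp add: ln_mult ln_div)
  ultimately show ?thesis unfolding S_def c1_def m_def T1_def \<epsilon>_def by (simp add: algebra_simps)
qed

end

theorem proposition4p7:
  fixes X :: "'a::metric_space set" and f :: "real \<Rightarrow> 'a \<Rightarrow> 'a" and \<phi> :: "'a \<Rightarrow> real"
    and G :: "('a \<times> real) set" and \<delta> \<gamma> \<eta> :: real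
  assumes "compact X"
    and "continuous_flow X f"
    and "continuous_on X \<phi>"
    and "G \<subseteq> X \<times> {0..}"
    and "\<delta> > 0"
    and "tail_W_spec X f G \<delta>"
    and "\<gamma> > 2 * \<delta>"
    and "\<eta> \<ge> 0"
    and "bowen_property X f \<phi> G (max (\<gamma> / 2) \<eta>)"
  shows "\<exists>C4. \<forall>t\<ge>0. top_pressure X f \<phi> < \<infinity> \<longrightarrow>
           Lambda X f \<phi> G \<gamma> \<eta> t \<le> C4 * exp (t * real_of_ereal (top_pressure X f \<phi>))"
proof -
  obtain T0 where T0: "T0 > 0" and W: "W_spec X f (G \<inter> (X \<times> {T0..})) \<delta>"
    using assms(6) unfolding tail_W_spec_def by blast
  obtain \<tau> tau where \<tau>: "\<tau> > 0"
    and spec: "\<forall>ps. set ps \<subseteq> G \<inter> (X \<times> {T0..}) \<longrightarrow>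
           (\<forall>i. i + 1 < length ps \<longrightarrow> tau ps i \<in> {0..\<tau>}) \<and>
           (\<exists>y\<in>X. \<forall>j<length ps.
              bowen_dist f (snd (ps ! j))
                 (f (\<Sum>i<j. snd (ps ! i) + tau ps i) y) (fst (ps ! j)) < \<delta>)"
    and cons: "\<forall>ps qs j. set ps \<subseteq> G \<inter> (X \<times> {T0..}) \<longrightarrow> set qs \<subseteq> G \<inter> (X \<times> {T0..}) \<longrightarrow> take j ps = take j qs \<longrightarrow>
           (\<forall>i. i + 1 < j \<longrightarrow> tau ps i = tau qs i)"
    using W unfolding W_spec_def by blast
  obtain K where bow: "\<forall>(x, t)\<in>G. \<forall>y\<in>bowen_ball X f t x (max (\<gamma> / 2) \<eta>). \<bar>Phi X f \<phi> 0 x t - Phi X f \<phi> 0 y t\<bar> \<le> K"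
    using assms(9) unfolding bowen_property_def by blast
  have "bounded (\<phi> ` X)" by (rule compact_imp_bounded[OF compact_continuous_image[OF assms(3,1)]])
  then obtain M where M: "\<forall>x\<in>\<phi> ` X. \<bar>x\<bar> \<le> M" unfolding bounded_real by blast
  interpret flowsys X f \<phi> M using assms(1-3) M by unfold_locales auto
  define \<epsilon> where "\<epsilon> = (\<gamma> - 2 * \<delta>) / 2"
  have \<epsilon>0: "\<epsilon> > 0" using assms(7) unfolding \<epsilon>_def by simp
  obtain \<rho> where \<rho>: "\<rho> > 0" "\<forall>z\<in>X. \<forall>h. \<bar>h\<bar> < \<rho> \<longrightarrow> dist (f h z) z < (\<gamma> - 2 * \<delta>) / 2"
    using time_shift[OF \<epsilon>0] unfolding \<epsilon>_def by blast
  define c where "c = 2 * K + \<tau> * M + ln (real (nat \<lfloor>\<tau> / \<rho>\<rfloor>) + 1)"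
  have \<gamma>0: "\<gamma> > 0" using assms(5,7) by simp
  obtain N where N: "\<forall>t\<in>{0..T0}. \<forall>E. E \<subseteq> X \<longrightarrow> separated f t \<gamma> E \<longrightarrow> finite E \<and> card E \<le> N"
    using sep_bound[of T0 \<gamma>] T0 \<gamma>0 by auto
  define p where "p = real_of_ereal (top_pressure X f \<phi>)"
  define C4 where "C4 = max (exp (c + \<tau> * p)) (real N * exp (T0 * M + T0 * \<bar>p\<bar>))"
  have C40: "C4 \<ge> 0" unfolding C4_def by (simp add: le_max_iff_disj)
  show ?thesis
  proof (intro exI[of _ C4] allI impI)
    fix t :: real assume t0: "t \<ge> 0" and Pfin: "top_pressure X f \<phi> < \<infinity>"
    have bound: "(\<Sum>x\<in>E. exp (Phi X f \<phi> \<eta> x t)) \<le> C4 * exp (t * p)"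
      if E: "finite E" "E \<subseteq> {x. (x, t) \<in> G}" "separated f t \<gamma> E" for E
    proof (cases "E = {}")
      case True
      then show ?thesis using C40 by simp
    next
      case False
      have EX: "E \<subseteq> X" using E(2) assms(4) by auto
      have XnE: "X \<noteq> {}" using False EX by blast
      show ?thesis
      proof (cases "t \<ge> T0")
        case True
        have tb: "ereal ((ln (\<Sum>x\<in>E. exp (Phi X f \<phi> \<eta> x t)) - c) / (t + \<tau>)) \<le> gg \<epsilon>"
          using tail_bound[OF assms(4,5,7,8) T0 \<tau> spec cons bow \<rho> True E False] unfolding c_def \<epsilon>_def .
        also have "\<dots> \<le> top_pressure X f \<phi>" by (rule pressure_ge[OF XnE \<epsilon>0])
        finally have le: "ereal ((ln (\<Sum>x\<in>E. exp (Phi X f \<phi> \<eta> x t)) - c) / (t + \<tau>)) \<le> top_pressure X f \<phi>" .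
        then have "top_pressure X f \<phi> = ereal p" unfolding p_def using Pfin
          by (cases "top_pressure X f \<phi>") auto
        then have "(ln (\<Sum>x\<in>E. exp (Phi X f \<phi> \<eta> x t)) - c) / (t + \<tau>) \<le> p" using le by simp
        moreover have "t + \<tau> > 0" using t0 \<tau> by simp
        ultimately have "ln (\<Sum>x\<in>E. exp (Phi X f \<phi> \<eta> x t)) - c \<le> p * (t + \<tau>)"
          by (simp add: divide_le_eq)
        then have lnS: "ln (\<Sum>x\<in>E. exp (Phi X f \<phi> \<eta> x t)) \<le> (c + \<tau> * p) + t * p"
          by (simp add: algebra_simps)
        have S0: "0 < (\<Sum>x\<in>E. exp (Phi X f \<phi> \<eta> x t))" using E(1) False by (intro sum_pos) auto
        have "(\<Sum>x\<in>E. exp (Phi X f \<phi> \<eta> x t)) = exp (ln (\<Sum>x\<in>E. exp (Phi X f \<phi> \<eta> x t)))"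
          using S0 by simp
        also have "\<dots> \<le> exp ((c + \<tau> * p) + t * p)" using lnS by simp
        also have "\<dots> = exp (c + \<tau> * p) * exp (t * p)" by (simp add: exp_add)
        also have "\<dots> \<le> C4 * exp (t * p)" unfolding C4_def by (intro mult_right_mono) auto
        finally show ?thesis .
      next
        case False
        then have tT0: "t \<in> {0..T0}" using t0 by simp
        have cE: "card E \<le> N" using N[rule_format, OF tT0 EX E(3)] by simp
        obtain x0 where "x0 \<in> X" using XnE by blast
        then have "\<bar>\<phi> x0\<bar> \<le> M" using M by blast
        then have M0: "M \<ge> 0" by linarith
        have "(\<Sum>x\<in>E. exp (Phi X f \<phi> \<eta> x t)) \<le> of_nat (card E) * exp (T0 * M)"
        proof (rule sum_bounded_above)
          fix x assume "x \<in> E"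
          then have "x \<in> X" using EX by blast
          then have "Phi X f \<phi> \<eta> x t \<le> t * M" using Phi_le t0 by simp
          also have "\<dots> \<le> T0 * M" using tT0 M0 by (intro mult_right_mono) auto
          finally show "exp (Phi X f \<phi> \<eta> x t) \<le> exp (T0 * M)" by simp
        qed
        also have "\<dots> \<le> real N * exp (T0 * M)" using cE by (intro mult_right_mono) auto
        also have "\<dots> = real N * exp (T0 * M + T0 * \<bar>p\<bar>) * exp (- (T0 * \<bar>p\<bar>))"
          by (simp add: exp_add[symmetric])
        also have "\<dots> \<le> real N * exp (T0 * M + T0 * \<bar>p\<bar>) * exp (t * p)"
        proof (rule mult_left_mono)
          have "- (T0 * \<bar>p\<bar>) \<le> - (t * \<bar>p\<bar>)" using tT0 by (intro le_imp_neg_le mult_right_mono) auto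
          also have "\<dots> \<le> t * p"
          proof -
            have "- \<bar>p\<bar> \<le> p" by simp
            then have "t * (- \<bar>p\<bar>) \<le> t * p" using t0 by (rule mult_left_mono)
            then show ?thesis by simp
          qed
          finally show "exp (- (T0 * \<bar>p\<bar>)) \<le> exp (t * p)" by simp
        qed simp
        also have "\<dots> \<le> C4 * exp (t * p)" unfolding C4_def by (intro mult_right_mono) auto
        finally show ?thesis .
      qed
    qed
    show "Lambda X f \<phi> G \<gamma> \<eta> t \<le> C4 * exp (t * real_of_ereal (top_pressure X f \<phi>))"
      unfolding Lambda_def p_def[symmetric]
    proof (rule cSup_least)
      show "{(\<Sum>x\<in>E. exp (Phi X f \<phi> \<eta> x t)) | E. finite E \<and> E \<subseteq> {x. (x, t) \<in> G} \<and> separated f t \<gamma> E} \<noteq> {}"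
        by (auto simp: separated_def intro!: exI[of _ "{}"])
    next
      fix v assume "v \<in> {(\<Sum>x\<in>E. exp (Phi X f \<phi> \<eta> x t)) | E. finite E \<and> E \<subseteq> {x. (x, t) \<in> G} \<and> separated f t \<gamma> E}"
      then obtain E where "v = (\<Sum>x\<in>E. exp (Phi X f \<phi> \<eta> x t))" "finite E" "E \<subseteq> {x. (x, t) \<in> G}" "separated f t \<gamma> E"
        by blast
      then show "v \<le> C4 * exp (t * p)" using bound by simp
    qed
  qed
qed

end
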